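(* Suppose $D$ is a balanced effective divisor class on $X$ with $\chi(D)\ge1$, and $A_t$ is an ample divisor with $2A_t\cdot D\le A_t\cdot K$. Suppose $D$ is $\ell$ steps away from having equal multiplicities. Then $$\ell<\frac12\left(n-\sqrt{(8\chi(D)+1)n}\right).$$ In particular, if $10\le n\le 12$, then $\chi(D)=1$, $\ell=0$, and $D$ has equal multiplicities.
   Context: Let $X$ be the blowup of $\mathbb{P}^2_{\mathbb{C}}$ at $n$ very general points, with $H$ the pullback of a line class, $E_i$ the exceptional divisors, $E=\sum_iE_i$, and $K=K_X=-3H+E$. For real $t$, $A_t=tH-E$. Write $\chi(D)=\chi(\mathcal{O}_X(D))$; effective means the class of an effective divisor (zero allowed). A divisor $D=dH-\sum_im_iE_i$ is balanced if $|m_i-m_j|\le1$ for all $i,j$. For a balanced $D$, there are $k$ indices with multiplicity $m+1$ and $n-k$ indices with multiplicity $m$ for some $m$ and $0\le k\le n$; setting $\ell=\min\{k,n-k\}$, $D$ is said to be $\ell$ steps away from having equal multiplicities. *)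

theory Defs
  imports Complex_Main
begin

text \<open>
  Setting: X is the blowup of the complex projective plane at n very general points.
  A divisor class D = d H - sum_i m_i E_i is encoded by an integer d and a
  multiplicity function m :: nat => int, of which only the values m i for i < n matter.
\<close>

type_synonym cpoint = "complex \<times> complex \<times> complex"

text \<open>Homogeneous polynomials of degree d in C[x,y,z], given by their coefficients on
  exponent triples (a,b,c) with a + b + c = d (other coefficients are ignored).\<close>

definition monomials :: "nat \<Rightarrow> (nat \<times> nat \<times> nat) set" where
  "monomials d = {(a, b, c). a + b + c = d}"

definition hpoly_nonzero :: "nat \<Rightarrow> (nat \<times> nat \<times> nat \<Rightarrow> complex) \<Rightarrow> bool" where
  "hpoly_nonzero d f \<longleftrightarrow> (\<exists>e\<in>monomials d. f e \<noteq> 0)"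

definition ffact_nat :: "nat \<Rightarrow> nat \<Rightarrow> nat" where
  "ffact_nat k j = (if j \<le> k then fact k div fact (k - j) else 0)"

definition hpoly_deriv_at ::
  "nat \<Rightarrow> (nat \<times> nat \<times> nat \<Rightarrow> complex) \<Rightarrow> nat \<times> nat \<times> nat \<Rightarrow> cpoint \<Rightarrow> complex" where
  "hpoly_deriv_at d f = (\<lambda>(i, j, k) (x, y, z).
     (\<Sum>(a, b, c)\<in>monomials d.
        f (a, b, c) * of_nat (ffact_nat a i * ffact_nat b j * ffact_nat c k)
        * x ^ (a - i) * y ^ (b - j) * z ^ (c - k)))"

definition mult_ge :: "nat \<Rightarrow> (nat \<times> nat \<times> nat \<Rightarrow> complex) \<Rightarrow> cpoint \<Rightarrow> nat \<Rightarrow> bool" where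
  "mult_ge d f p r \<longleftrightarrow>
     (\<forall>i j k. i + j + k < r \<longrightarrow> hpoly_deriv_at d f (i, j, k) p = 0)"

definition distinct_proj_points :: "nat \<Rightarrow> (nat \<Rightarrow> cpoint) \<Rightarrow> bool" where
  "distinct_proj_points n p \<longleftrightarrow>
     (\<forall>i<n. p i \<noteq> (0, 0, 0)) \<and>
     (\<forall>i<n. \<forall>j<n. i \<noteq> j \<longrightarrow>
        \<not> (\<exists>c::complex. (case p i of (x, y, z) \<Rightarrow> (c * x, c * y, c * z)) = p j))"

text \<open>Since h^0 is upper semicontinuous on the (irreducible) configuration space of n
  distinct points, its value at very general points is its minimum; hence the class is
  effective at very general points iff for every configuration of n distinct points
  there is a nonzero plane curve of degree d with multiplicity at least max(m_i,0) at
  the i-th point (exceptional curves with negative coefficient are fixed components).\<close>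
definition effective :: "nat \<Rightarrow> int \<Rightarrow> (nat \<Rightarrow> int) \<Rightarrow> bool" where
  "effective n d m \<longleftrightarrow> 0 \<le> d \<and>
     (\<forall>p. distinct_proj_points n p \<longrightarrow>
        (\<exists>f. hpoly_nonzero (nat d) f \<and>
             (\<forall>i<n. mult_ge (nat d) f (p i) (nat (max (m i) 0)))))"

text \<open>Intersection product on Pic X: H^2 = 1, E_i^2 = -1, H.E_i = 0, E_i.E_j = 0.\<close>
definition intersect :: "nat \<Rightarrow> real \<times> (nat \<Rightarrow> real) \<Rightarrow> real \<times> (nat \<Rightarrow> real) \<Rightarrow> real" where
  "intersect n D D' = fst D * fst D' - (\<Sum>i<n. snd D i * snd D' i)"

definition int_class :: "int \<Rightarrow> (nat \<Rightarrow> int) \<Rightarrow> real \<times> (nat \<Rightarrow> real)" where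
  "int_class d m = (of_int d, \<lambda>i. of_int (m i))"

text \<open>A_t = t H - E and K = -3H + E.\<close>
definition A_cls :: "real \<Rightarrow> real \<times> (nat \<Rightarrow> real)" where
  "A_cls t = (t, \<lambda>_. 1)"

definition K_cls :: "real \<times> (nat \<Rightarrow> real)" where
  "K_cls = (-3, \<lambda>_. -1)"

text \<open>chi(O_X(D)) via Riemann--Roch on the rational surface X (chi(O_X) = 1):
  chi(D) = 1 + (D.D - D.K)/2.\<close>
definition chi :: "nat \<Rightarrow> int \<Rightarrow> (nat \<Rightarrow> int) \<Rightarrow> real" where
  "chi n d m = 1 + (intersect n (int_class d m) (int_class d m)
                    - intersect n (int_class d m) K_cls) / 2"

text \<open>Ampleness of the real divisor A_t on X, via the Nakai--Moishezon criterion
  (valid for R-divisors by Campana--Peternell): A_t^2 > 0 and A_t.C > 0 for every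
  nonzero effective class C (equivalently, every irreducible curve).\<close>
definition ample_A :: "nat \<Rightarrow> real \<Rightarrow> bool" where
  "ample_A n t \<longleftrightarrow> intersect n (A_cls t) (A_cls t) > 0 \<and>
     (\<forall>d m. effective n d m \<and> (d \<noteq> 0 \<or> (\<exists>i<n. m i \<noteq> 0)) \<longrightarrow>
        intersect n (A_cls t) (int_class d m) > 0)"

definition balanced :: "nat \<Rightarrow> (nat \<Rightarrow> int) \<Rightarrow> bool" where
  "balanced n m \<longleftrightarrow> (\<forall>i<n. \<forall>j<n. \<bar>m i - m j\<bar> \<le> 1)"

definition steps_away :: "nat \<Rightarrow> (nat \<Rightarrow> int) \<Rightarrow> nat \<Rightarrow> bool" where
  "steps_away n m l \<longleftrightarrow> (\<exists>m0 k. k \<le> n \<and>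
     card {i. i < n \<and> m i = m0 + 1} = k \<and> card {i. i < n \<and> m i = m0} = n - k \<and>
     l = min k (n - k))"

end

theory Submission
  imports Defs
begin

lemma H_effective: "effective n 1 (\<lambda>_. 0)"
  unfolding effective_def
proof (intro conjI allI impI)
  fix p :: "nat \<Rightarrow> cpoint"
  show "\<exists>f. hpoly_nonzero (nat 1) f \<and> (\<forall>i<n. mult_ge (nat 1) f (p i) (nat (max ((\<lambda>_. 0::int) i) 0)))"
  proof (rule exI[of _ "\<lambda>_. 1"], intro conjI)
    have "(1,0,0) \<in> monomials 1" by (simp add: monomials_def)
    thus "hpoly_nonzero (nat 1) (\<lambda>_. 1)" unfolding hpoly_nonzero_def by auto
  qed (simp add: mult_ge_def)
qed simp

lemma t_pos: assumes "ample_A n t" shows "t > 0"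
proof -
  have "intersect n (A_cls t) (int_class 1 (\<lambda>_. 0)) > 0"
    using assms H_effective unfolding ample_A_def by auto
  then show ?thesis by (simp add: intersect_def A_cls_def int_class_def)
qed

theorem proposition4p6:
  fixes n :: nat and d :: int and m :: "nat \<Rightarrow> int" and t :: real and l :: nat
  assumes "balanced n m"
    and "effective n d m"
    and "chi n d m \<ge> 1"
    and "ample_A n t"
    and "2 * intersect n (A_cls t) (int_class d m) \<le> intersect n (A_cls t) K_cls"
    and "steps_away n m l"
  shows "real l < (real n - sqrt ((8 * chi n d m + 1) * real n)) / 2
         \<and> (10 \<le> n \<and> n \<le> 12 \<longrightarrow>
              chi n d m = 1 \<and> l = 0 \<and> (\<forall>i<n. \<forall>j<n. m i = m j))"
proof -
  obtain m0 k where k: "k \<le> n" and c1: "card {i. i < n \<and> m i = m0 + 1} = k"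
    and c0: "card {i. i < n \<and> m i = m0} = n - k" and lk: "l = min k (n - k)"
    using assms(6) unfolding steps_away_def by blast
  define S1 where "S1 = {i. i < n \<and> m i = m0 + 1}"
  define S0 where "S0 = {i. i < n \<and> m i = m0}"
  have disj: "S1 \<inter> S0 = {}" unfolding S1_def S0_def by auto
  have sub: "S1 \<union> S0 \<subseteq> {..<n}" unfolding S1_def S0_def by auto
  have fin: "finite S1" "finite S0" unfolding S1_def S0_def by auto
  have "card (S1 \<union> S0) = n" using card_Un_disjoint[OF fin disj] c1 c0 k
    unfolding S1_def S0_def by simp
  hence U: "S1 \<union> S0 = {..<n}" using sub by (simp add: card_subset_eq)
  have allv: "\<forall>i<n. m i = m0 \<or> m i = m0 + 1" using U unfolding S1_def S0_def by auto
  have gsum: "(\<Sum>i<n. g (m i)) = real k * g (m0 + 1) + real (n - k) * g m0" for g :: "int \<Rightarrow> real"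
  proof -
    have "(\<Sum>i<n. g (m i)) = (\<Sum>i\<in>S1. g (m i)) + (\<Sum>i\<in>S0. g (m i))"
      using U sum.union_disjoint[OF fin disj] by metis
    also have "(\<Sum>i\<in>S1. g (m i)) = (\<Sum>i\<in>S1. g (m0 + 1))"
      by (rule sum.cong) (auto simp: S1_def)
    also have "(\<Sum>i\<in>S0. g (m i)) = (\<Sum>i\<in>S0. g m0)"
      by (rule sum.cong) (auto simp: S0_def)
    finally show ?thesis using c1 c0 unfolding S1_def S0_def by simp
  qed
  define M where "M = real_of_int m0"
  define K where "K = real k"
  define N where "N = real n"
  define D where "D = real_of_int d"
  have KN: "K \<le> N" using k by (simp add: K_def N_def)
  have nk: "real (n - k) = N - K" using k by (simp add: K_def N_def)
  have s1: "(\<Sum>i<n. real_of_int (m i)) = K * (M + 1) + (N - K) * M"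
    using gsum[of real_of_int] by (simp add: nk K_def M_def)
  have s2: "(\<Sum>i<n. real_of_int (m i) * real_of_int (m i)) = K * (M + 1)^2 + (N - K) * M^2"
    using gsum[of "\<lambda>x. real_of_int x * real_of_int x"] by (simp add: nk K_def M_def power2_eq_square)
  define s where "s = N * M + K"
  have ss: "K * (M + 1) + (N - K) * M = s" unfolding s_def by (simp add: algebra_simps)
  define Q where "Q = K * (M + 1)^2 + (N - K) * M^2 + s"
  have chi: "chi n d m = 1 + (D^2 - Q + 3 * D) / 2"
  proof -
    have "chi n d m = 1 + (D * D - (\<Sum>i<n. real_of_int (m i) * real_of_int (m i))
        - (-3 * D + (\<Sum>i<n. real_of_int (m i)))) / 2"
      unfolding chi_def intersect_def int_class_def K_cls_def D_def
      by (simp add: sum_negf)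
    also have "\<dots> = 1 + (D^2 - Q + 3 * D) / 2"
      unfolding s1 s2 Q_def ss[symmetric] by (simp add: power2_eq_square algebra_simps)
    finally show ?thesis .
  qed
  have D0: "D \<ge> 0" using assms(2) by (simp add: effective_def D_def)
  have tp: "t > 0" using t_pos[OF assms(4)] .
  have tN: "t^2 > N" using assms(4) by (simp add: ample_A_def intersect_def A_cls_def N_def power2_eq_square)
  have N0: "N \<ge> 0" by (simp add: N_def)
  have sqt: "sqrt N < t" using tN tp N0
    by (metis abs_of_pos real_sqrt_abs real_sqrt_less_mono)
  have c5: "(2 * D + 3) * t \<le> N + 2 * s"
    using assms(5) s1 ss unfolding intersect_def int_class_def A_cls_def K_cls_def
    by (simp add: D_def N_def algebra_simps)
  have st2: "(2 * D + 3) * sqrt N < (2 * D + 3) * t"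
    using sqt D0 by (intro mult_strict_left_mono) auto
  have st3: "(2 * D + 3) * sqrt N < N + 2 * s" using st2 c5 by linarith
  have st4: "((2 * D + 3) * sqrt N)^2 < (N + 2 * s)^2"
    using st3 D0 N0 by (intro power_strict_mono) auto
  hence st5: "(2 * D + 3)^2 * N < (N + 2 * s)^2" using N0 by (simp add: power_mult_distrib)
  have e1: "(8 * chi n d m + 1) * N = (2 * D + 3)^2 * N - 4 * Q * N"
    unfolding chi by (simp add: field_simps power2_eq_square)
  have e2: "(N + 2 * s)^2 - 4 * Q * N = (N - 2 * K)^2"
    unfolding Q_def s_def by (simp add: algebra_simps power2_eq_square)
  define L where "L = real l"
  have LL: "L = K \<or> L = N - K" using lk k by (auto simp: L_def K_def N_def min_def)
  have Lle: "N - 2 * L \<ge> 0" using lk k by (auto simp: L_def N_def min_def)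
  have sqL: "(N - 2 * K)^2 = (N - 2 * L)^2" using LL by (auto simp: power2_eq_square algebra_simps)
  have main: "(8 * chi n d m + 1) * N < (N - 2 * L)^2"
    using e1 e2 st5 sqL by linarith
  have "sqrt ((8 * chi n d m + 1) * N) < sqrt ((N - 2 * L)^2)"
    using main by (rule real_sqrt_less_mono)
  hence part1: "sqrt ((8 * chi n d m + 1) * N) < N - 2 * L" using Lle by simp
  have part2: "chi n d m = 1 \<and> l = 0 \<and> (\<forall>i<n. \<forall>j<n. m i = m j)" if hn: "10 \<le> n" "n \<le> 12"
  proof -
    define z where "z = d * d + 3 * d - (\<Sum>i<n. m i * m i) - (\<Sum>i<n. m i)"
    have ev: "even z"
    proof -
      have "even (d * d + 3 * d)" by auto
      moreover have "even (\<Sum>i<n. m i * m i + m i)"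
        by (rule dvd_sum) auto
      ultimately show ?thesis unfolding z_def by (simp add: sum.distrib)
    qed
    then obtain w where w: "z = 2 * w" by blast
    have "chi n d m = 1 + real_of_int z / 2"
      unfolding chi_def intersect_def int_class_def K_cls_def z_def
      by (simp add: sum_negf field_simps)
    hence cw: "chi n d m = 1 + real_of_int w" using w by simp
    have N10: "N \<ge> 10" "N \<le> 12" using hn by (auto simp: N_def)
    have "(8 * chi n d m + 1) * N < N * N" 
    proof -
      have "(N - 2 * L)^2 \<le> N^2" using Lle N0 by (intro power_mono) (auto simp: L_def)
      thus ?thesis using main by (simp add: power2_eq_square)
    qed
    hence "8 * chi n d m + 1 < N" using N10 by simp
    hence "w < 1" using cw N10 by linarith
    moreover have "w \<ge> 0" using cw assms(3) by simp
    ultimately have w0: "w = 0" by simp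
    hence chi1: "chi n d m = 1" using cw by simp
    have "9 * N < (N - 2 * L)^2" using main chi1 by simp
    have l0: "l = 0"
    proof (rule ccontr)
      assume "l \<noteq> 0"
      hence "L \<ge> 1" by (simp add: L_def)
      hence "(N - 2 * L)^2 \<le> (N - 2)^2" using Lle N10 by (intro power_mono) auto
      hence "9 * N < (N - 2)^2" using \<open>9 * N < (N - 2 * L)^2\<close> by linarith
      hence "N * 13 < N * N + 4" by (simp add: power2_eq_square algebra_simps)
      moreover have "N * N \<le> N * 12" using N10 by (intro mult_left_mono) auto
      ultimately show False using N10 by linarith
    qed
    have "k = 0 \<or> k = n" using l0 lk k unfolding min_def by (cases "k \<le> n - k") simp_all
    hence "(\<forall>i<n. m i = m0) \<or> (\<forall>i<n. m i = m0 + 1)"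
    proof
      assume "k = 0"
      hence "S1 = {}" using c1 fin(1) unfolding S1_def by simp
      hence "S0 = {..<n}" using U by simp
      thus ?thesis unfolding S0_def by blast
    next
      assume "k = n"
      hence "S0 = {}" using c0 fin(2) unfolding S0_def by simp
      hence "S1 = {..<n}" using U by simp
      thus ?thesis unfolding S1_def by blast
    qed
    hence "\<forall>i<n. \<forall>j<n. m i = m j" by auto
    thus ?thesis using chi1 l0 by blast
  qed
  have "real l < (real n - sqrt ((8 * chi n d m + 1) * real n)) / 2"
  proof -
    have "2 * real l < real n - sqrt ((8 * chi n d m + 1) * real n)"
      using part1 unfolding L_def N_def by linarith
    thus ?thesis by (simp add: field_simps)
  qed
  thus ?thesis using part2 by blast
qed

end
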